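(* Let $C$ be a copula and $p_0,q_0,q\in[0,1]$ with $q\neq q_0$. If $\lambda^C(q_0|p_0)$ and $\lambda^C(q|p_0)$ exist, then $$\lambda^C(q_0|p_0)+\lambda^C(q|p_0)\le 1.$$
   Context: For a copula $C$ (bivariate distribution function on $[0,1]^2$ with uniform margins) and $p,q\in[0,1]$, let $(U,V)$ have joint distribution function $C$; the $(p,q)$-quantile dependence coefficient is $\lambda^C(q|p)=\lim_{t\to0^+}P((q-t)^+<V\le(q+t)^-\mid (p-t)^+<U\le(p+t)^-)$ when the limit exists, where $a^+=\max(a,0)$ and $a^-=1-(1-a)^+$. *)

theory Defs
  imports "HOL-Analysis.Analysis"
begin

definition copula :: "(real \<Rightarrow> real \<Rightarrow> real) \<Rightarrow> bool" where
  "copula C \<longleftrightarrow>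
     (\<forall>u\<in>{0..1}. C u 0 = 0 \<and> C 0 u = 0 \<and> C u 1 = u \<and> C 1 u = u) \<and>
     (\<forall>u1\<in>{0..1}. \<forall>u2\<in>{0..1}. \<forall>v1\<in>{0..1}. \<forall>v2\<in>{0..1}.
        u1 \<le> u2 \<longrightarrow> v1 \<le> v2 \<longrightarrow> C u2 v2 - C u2 v1 - C u1 v2 + C u1 v1 \<ge> 0)"

definition pos_part :: "real \<Rightarrow> real" where
  "pos_part a = max a 0"

definition neg_part :: "real \<Rightarrow> real" where
  "neg_part a = 1 - pos_part (1 - a)"

text \<open>C-volume of the rectangle (a1,a2] x (b1,b2], i.e. P(a1<U<=a2, b1<V<=b2).\<close>
definition C_vol :: "(real \<Rightarrow> real \<Rightarrow> real) \<Rightarrow> real \<Rightarrow> real \<Rightarrow> real \<Rightarrow> real \<Rightarrow> real" where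
  "C_vol C a1 a2 b1 b2 = C a2 b2 - C a1 b2 - C a2 b1 + C a1 b1"

text \<open>The conditional probability
  P((q-t)^+ < V <= (q+t)^- | (p-t)^+ < U <= (p+t)^-), using that U is uniform.\<close>
definition qd_ratio :: "(real \<Rightarrow> real \<Rightarrow> real) \<Rightarrow> real \<Rightarrow> real \<Rightarrow> real \<Rightarrow> real" where
  "qd_ratio C p q t =
     C_vol C (pos_part (p - t)) (neg_part (p + t)) (pos_part (q - t)) (neg_part (q + t))
     / (neg_part (p + t) - pos_part (p - t))"

text \<open>\<open>has_qdc C p q L\<close>: the coefficient lambda^C(q|p) exists and equals L.\<close>
definition has_qdc :: "(real \<Rightarrow> real \<Rightarrow> real) \<Rightarrow> real \<Rightarrow> real \<Rightarrow> real \<Rightarrow> bool" where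
  "has_qdc C p q L \<longleftrightarrow> ((\<lambda>t. qd_ratio C p q t) \<longlongrightarrow> L) (at_right 0)"

end

theory Submission
  imports Defs
begin

lemma vol_nonneg:
  assumes "copula C" "0 \<le> a1" "a1 \<le> a2" "a2 \<le> 1" "0 \<le> b1" "b1 \<le> b2" "b2 \<le> 1"
  shows "C_vol C a1 a2 b1 b2 \<ge> 0"
proof -
  have "\<forall>u1\<in>{0..1}. \<forall>u2\<in>{0..1}. \<forall>v1\<in>{0..1}. \<forall>v2\<in>{0..1}.
        u1 \<le> u2 \<longrightarrow> v1 \<le> v2 \<longrightarrow> C u2 v2 - C u2 v1 - C u1 v2 + C u1 v1 \<ge> 0"
    using assms(1) unfolding copula_def by blast
  then have "C a2 b2 - C a2 b1 - C a1 b2 + C a1 b1 \<ge> 0" using assms(2-) by simp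
  then show ?thesis unfolding C_vol_def by linarith
qed

lemma two_sum:
  assumes "copula C" "0 \<le> a1" "a1 \<le> a2" "a2 \<le> 1"
    "0 \<le> b1" "b1 \<le> b2" "b2 \<le> c1" "c1 \<le> c2" "c2 \<le> 1"
  shows "C_vol C a1 a2 b1 b2 + C_vol C a1 a2 c1 c2 \<le> a2 - a1"
proof -
  have "C_vol C a1 a2 0 b1 \<ge> 0" "C_vol C a1 a2 b2 c1 \<ge> 0" "C_vol C a1 a2 c2 1 \<ge> 0"
    using vol_nonneg[OF assms(1-4)] assms by auto
  moreover have "C a2 1 = a2" "C a1 1 = a1" "C a2 0 = 0" "C a1 0 = 0"
    using assms unfolding copula_def by auto
  ultimately show ?thesis unfolding C_vol_def by linarith
qed

lemma ratio_sum:
  assumes "copula C" "p \<in> {0..1}" "q0 \<in> {0..1}" "q \<in> {0..1}" "q0 < q"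
    "0 < t" "2 * t < q - q0"
  shows "qd_ratio C p q0 t + qd_ratio C p q t \<le> 1"
proof -
  define a1 a2 where "a1 = pos_part (p - t)" and "a2 = neg_part (p + t)"
  have a: "0 \<le> a1" "a1 < a2" "a2 \<le> 1"
    using assms unfolding a1_def a2_def pos_part_def neg_part_def by auto
  have "C_vol C a1 a2 (pos_part (q0 - t)) (neg_part (q0 + t))
      + C_vol C a1 a2 (pos_part (q - t)) (neg_part (q + t)) \<le> a2 - a1"
    apply (rule two_sum[OF assms(1)])
    using a assms unfolding pos_part_def neg_part_def by auto
  then have "(C_vol C a1 a2 (pos_part (q0 - t)) (neg_part (q0 + t))
      + C_vol C a1 a2 (pos_part (q - t)) (neg_part (q + t))) / (a2 - a1) \<le> 1"
    using a by simp
  then show ?thesis unfolding qd_ratio_def a1_def a2_def add_divide_distrib by simp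
qed

theorem proposition4:
  fixes C :: "real \<Rightarrow> real \<Rightarrow> real" and p0 q0 q L0 L :: real
  assumes "copula C"
    and "p0 \<in> {0..1}" and "q0 \<in> {0..1}" and "q \<in> {0..1}" and "q \<noteq> q0"
    and "has_qdc C p0 q0 L0" and "has_qdc C p0 q L"
  shows "L0 + L \<le> 1"
proof -
  have lim: "((\<lambda>t. qd_ratio C p0 q0 t + qd_ratio C p0 q t) \<longlongrightarrow> L0 + L) (at_right 0)"
    using assms(6,7) unfolding has_qdc_def by (intro tendsto_add)
  define d where "d = \<bar>q - q0\<bar> / 2"
  have d: "d > 0" using assms(5) unfolding d_def by simp
  have ev: "\<forall>\<^sub>F t in at_right 0. qd_ratio C p0 q0 t + qd_ratio C p0 q t \<le> 1"
    unfolding eventually_at_right_field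
  proof (intro exI[of _ d] conjI allI impI)
    show "(0::real) < d" by fact
    fix t :: real assume t: "0 < t" "t < d"
    show "qd_ratio C p0 q0 t + qd_ratio C p0 q t \<le> 1"
    proof (cases "q0 < q")
      case True
      then show ?thesis using ratio_sum[OF assms(1-4) True] t d_def by auto
    next
      case False
      then have "q < q0" using assms(5) by simp
      then show ?thesis using ratio_sum[OF assms(1,2,4,3) \<open>q < q0\<close>, of t] t d_def by auto
    qed
  qed
  show ?thesis
    by (rule tendsto_upperbound[OF lim ev]) simp
qed

end
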